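(* Let $\alpha,\beta\in(0,\infty)$ and let $Y$ be a non-negative random variable with finite expectation $\mu=\mathbb{E}Y$ and (finite) variance $\sigma^2=\mathrm{Var}\,Y$. Then for all $c\in(0,\infty)$, $$\mathbb{E}\frac{1}{(\alpha+Y)^\beta}\leq\frac{1}{(\alpha+c)^\beta}+\frac{\beta(c-\mu)}{(\alpha+c)^{\beta+1}}+\frac{\sigma^2+(c-\mu)^2}{c^2}\Big(\frac{1}{\alpha^\beta}-\frac{\alpha+c(\beta+1)}{(\alpha+c)^{\beta+1}}\Big).$$ *)

theory Defs
  imports "HOL-Probability.Probability"
begin

end

theory Submission imports Defs begin

definition pw :: "real \<Rightarrow> real \<Rightarrow> real" where "pw b r = r powr (-b)"

lemma dp[derivative_intros]: assumes "r > 0" "D = -b * (pw b r / r)"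
  shows "((\<lambda>r. pw b r) has_real_derivative D) (at r)"
proof -
  have "((\<lambda>r. r powr (-b)) has_real_derivative (-b * r powr (-b - 1))) (at r)"
    using assms by (auto intro!: derivative_eq_intros)
  moreover have "r powr (-b - 1) = r powr (-b) / r" using assms by (simp add: powr_diff)
  ultimately show ?thesis using assms unfolding pw_def by simp
qed

lemma pw_pos: "r > 0 \<Longrightarrow> pw b r > 0" by (simp add: pw_def)

definition NN :: "real \<Rightarrow> real \<Rightarrow> real" where
  "NN b r = (b - b * (pw b r / r)) * (r - 1) - 2 * (pw b r - 1 + b * (r - 1))"
definition MM :: "real \<Rightarrow> real \<Rightarrow> real" where
  "MM b r = -(b+1) * (pw b r / r^2) + (b+2) * (pw b r / r) - 1"

lemma MM_le: assumes "0 < r" "r \<le> 1" "b > 0" shows "MM b r \<le> 0"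
proof -
  have "MM b r \<le> MM b 1"
  proof (rule DERIV_nonneg_imp_nondecreasing[OF assms(2)])
    fix x assume x: "r \<le> x" "x \<le> 1"
    hence xp: "x > 0" using assms by simp
    have d: "(MM b has_real_derivative
        (b+1)*(b+2) * (pw b x / x^3) * (1 - x)) (at x)"
      unfolding MM_def[abs_def] using xp
      by (auto intro!: derivative_eq_intros)
         (simp_all add: field_simps power2_eq_square power3_eq_cube power4_eq_xxxx; algebra)
    have "(b+1)*(b+2) * (pw b x / x^3) * (1 - x) \<ge> 0" using x xp assms pw_pos[of x b] by simp
    thus "\<exists>y. (MM b has_real_derivative y) (at x) \<and> 0 \<le> y" using d by metis
  qed
  thus ?thesis by (simp add: MM_def pw_def)
qed

lemma NN_ge: assumes "0 < r" "r \<le> 1" "b > 0" shows "NN b r \<ge> 0"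
proof -
  have "NN b 1 \<le> NN b r"
  proof (rule DERIV_nonpos_imp_nonincreasing[OF assms(2)])
    fix x assume x: "r \<le> x" "x \<le> 1"
    hence xp: "x > 0" using assms by simp
    have d: "(NN b has_real_derivative b * MM b x) (at x)"
      unfolding NN_def[abs_def] MM_def using xp
      by (auto intro!: derivative_eq_intros)
         (simp_all add: field_simps power2_eq_square power3_eq_cube power4_eq_xxxx; algebra)
    have "b * MM b x \<le> 0" using MM_le[of x b] x xp assms by (simp add: mult_nonneg_nonpos)
    thus "\<exists>y. (NN b has_real_derivative y) (at x) \<and> y \<le> 0" using d by metis
  qed
  thus ?thesis by (simp add: NN_def pw_def)
qed

lemma pw_le1: "r \<ge> 1 \<Longrightarrow> b > 0 \<Longrightarrow> pw b r \<le> 1"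
  unfolding pw_def by (simp add: powr_minus divide_simps ge_one_powr_ge_zero)

lemma pw_ge1: "0 < r \<Longrightarrow> r \<le> 1 \<Longrightarrow> b > 0 \<Longrightarrow> pw b r \<ge> 1"
  unfolding pw_def by (simp add: powr_minus divide_simps powr_le1)

lemma qid: "t \<noteq> (0::real) \<Longrightarrow> (A*t^2 - B*(2*t))/(t^2)^2 = (A*t - 2*B)/t^3"
  by (simp add: field_simps power2_eq_square power3_eq_cube power4_eq_xxxx)

definition HH :: "real \<Rightarrow> real \<Rightarrow> real" where
  "HH b r = (pw b r - 1 + b * (r - 1)) / (r - 1)^2"

lemma HH_mono: assumes "0 < r0" "r0 \<le> r" "r < 1" "b > 0" shows "HH b r \<le> HH b r0"
proof (rule DERIV_nonpos_imp_nonincreasing[OF assms(2)])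
  fix x assume x: "r0 \<le> x" "x \<le> r"
  hence xp: "x > 0" "x < 1" using assms by auto
  have d: "(HH b has_real_derivative NN b x / (x - 1)^3) (at x)"
  proof -
    have ne: "x - 1 \<noteq> 0" using xp by simp
    have "(HH b has_real_derivative
       ((b - b * (pw b x / x)) * (x - 1)^2 - (pw b x - 1 + b * (x - 1)) * (2 * (x - 1))) / ((x - 1)^2)^2) (at x)"
      unfolding HH_def[abs_def] using xp
      by (auto intro!: derivative_eq_intros)
    moreover have "((b - b * (pw b x / x)) * (x - 1)^2 - (pw b x - 1 + b * (x - 1)) * (2 * (x - 1))) / ((x - 1)^2)^2
       = NN b x / (x - 1)^3" unfolding NN_def using qid[OF ne] by simp
    ultimately show ?thesis by simp
  qed
  have "NN b x \<ge> 0" using NN_ge[of x b] xp assms by simp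
  moreover have "(x - 1)^3 < 0" using xp by simp
  ultimately have "NN b x / (x - 1)^3 \<le> 0" by (simp add: divide_nonneg_neg)
  thus "\<exists>y. (HH b has_real_derivative y) (at x) \<and> y \<le> 0" using d by metis
qed

definition PP :: "real \<Rightarrow> real \<Rightarrow> real" where
  "PP b r = b*(b+1)/2 * (r-1)^2 - pw b r + 1 - b*(r-1)"
definition P1 :: "real \<Rightarrow> real \<Rightarrow> real" where
  "P1 b r = b*(b+1)*(r-1) + b * (pw b r / r) - b"

lemma dPP: "0 < x \<Longrightarrow> (PP b has_real_derivative P1 b x) (at x)"
  unfolding PP_def[abs_def] P1_def
  by (auto intro!: derivative_eq_intros)

lemma dP1: "0 < x \<Longrightarrow> (P1 b has_real_derivative b*(b+1) - b*(b+1)*(pw b x / x^2)) (at x)"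
  unfolding P1_def[abs_def]
  by (auto intro!: derivative_eq_intros)
     (simp_all add: field_simps power2_eq_square power3_eq_cube power4_eq_xxxx; algebra)

lemma PP_ge: assumes "1 \<le> r" "b > 0" shows "PP b r \<ge> 0"
proof -
  have P1: "P1 b x \<ge> 0" if "1 \<le> x" for x
  proof -
    have "P1 b 1 \<le> P1 b x"
    proof (rule DERIV_nonneg_imp_nondecreasing[OF that])
      fix y assume y: "1 \<le> y" "y \<le> x"
      have "pw b y \<le> 1" using pw_le1 y assms by auto
      moreover have "y^2 \<ge> 1" using y by (simp add: one_le_power)
      ultimately have "pw b y / y^2 \<le> 1" by (simp add: divide_le_eq)
      hence "b*(b+1)*(pw b y / y^2) \<le> b*(b+1)*1"
        by (rule mult_left_mono) (use assms in auto)
      hence "b*(b+1) - b*(b+1)*(pw b y / y^2) \<ge> 0" by linarith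
      thus "\<exists>z. (P1 b has_real_derivative z) (at y) \<and> 0 \<le> z" using dP1[of y b] y by auto
    qed
    thus ?thesis by (simp add: P1_def pw_def)
  qed
  have "PP b 1 \<le> PP b r"
  proof (rule DERIV_nonneg_imp_nondecreasing[OF assms(1)])
    fix y assume y: "1 \<le> y" "y \<le> r"
    thus "\<exists>z. (PP b has_real_derivative z) (at y) \<and> 0 \<le> z" using dPP[of y b] P1[of y] by auto
  qed
  thus ?thesis by (simp add: PP_def pw_def)
qed

lemma PP_le: assumes "0 < r" "r \<le> 1" "b > 0" shows "PP b r \<le> 0"
proof -
  have P1: "P1 b x \<ge> 0" if "0 < x" "x \<le> 1" for x
  proof -
    have "P1 b 1 \<le> P1 b x"
    proof (rule DERIV_nonpos_imp_nonincreasing[OF that(2)])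
      fix y assume y: "x \<le> y" "y \<le> 1"
      have yp: "y > 0" using y that by auto
      have "pw b y \<ge> 1" using pw_ge1 y yp assms by auto
      moreover have "y^2 \<le> 1" using y yp by (simp add: power_le_one)
      moreover have "y^2 > 0" using yp by simp
      ultimately have "pw b y / y^2 \<ge> 1" by (simp add: le_divide_eq)
      hence "b*(b+1)*1 \<le> b*(b+1)*(pw b y / y^2)"
        by (rule mult_left_mono) (use assms in auto)
      hence "b*(b+1) - b*(b+1)*(pw b y / y^2) \<le> 0" by linarith
      thus "\<exists>z. (P1 b has_real_derivative z) (at y) \<and> z \<le> 0" using dP1[of y b] yp by auto
    qed
    thus ?thesis by (simp add: P1_def pw_def)
  qed
  have "PP b r \<le> PP b 1"
  proof (rule DERIV_nonneg_imp_nondecreasing[OF assms(2)])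
    fix y assume y: "r \<le> y" "y \<le> 1"
    thus "\<exists>z. (PP b has_real_derivative z) (at y) \<and> 0 \<le> z" using dPP[of y b] P1[of y] assms by auto
  qed
  thus ?thesis by (simp add: PP_def pw_def)
qed

lemma key: assumes "0 < r0" "r0 < 1" "r0 \<le> r" "b > 0"
  shows "pw b r \<le> 1 - b*(r-1) + HH b r0 * (r-1)^2"
proof -
  have id: "pw b r - 1 + b*(r-1) = HH b r * (r-1)^2" if "r \<noteq> 1" for r
    using that by (simp add: HH_def)
  consider "r = 1" | "r < 1" | "r > 1" by linarith
  thus ?thesis
  proof cases
    case 1 thus ?thesis by (simp add: pw_def)
  next
    case 2
    have "HH b r \<le> HH b r0" using HH_mono assms 2 by auto
    hence "HH b r * (r-1)^2 \<le> HH b r0 * (r-1)^2" by (simp add: mult_right_mono)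
    thus ?thesis using id[of r] 2 by linarith
  next
    case 3
    have a: "PP b r \<ge> 0" using PP_ge[of r b] 3 assms by simp
    have b: "PP b r0 \<le> 0" using PP_le[of r0 b] assms by simp
    have "HH b r \<le> b*(b+1)/2"
    proof -
      have "(r-1)^2 > 0" using 3 by simp
      thus ?thesis using a unfolding PP_def HH_def by (simp add: divide_le_eq)
    qed
    moreover have "HH b r0 \<ge> b*(b+1)/2"
    proof -
      have "(r0-1)^2 > 0" using assms by simp
      thus ?thesis using b unfolding PP_def HH_def by (simp add: le_divide_eq)
    qed
    ultimately have "HH b r * (r-1)^2 \<le> HH b r0 * (r-1)^2" by (simp add: mult_right_mono)
    thus ?thesis using id[of r] 3 by linarith
  qed
qed


lemma alg: fixes a c al b P Q y :: real
  assumes "a = al + c" "al > 0" "c > 0" "P > 0" "Q > 0"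
  shows "(1 - b*((al+y)/a - 1) + (P/Q - 1 + b*(al/a - 1))/(al/a - 1)^2 * ((al+y)/a - 1)^2) / P
   = 1/P + b*(c - y)/(P*a) + (1/Q - (al + c*(b+1))/(P*a))/c^2 * (y-c)^2"
proof -
  have ap: "a > 0" using assms by simp
  have e1: "(al+y)/a - 1 = (y - c)/a" and e2: "al/a - 1 = -c/a" and e3: "al + c*(b+1) = a + b*c"
    using assms by (auto simp: field_simps)
  have "(1 - b*((y - c)/a) + (P/Q - 1 + b*(-c/a))/(-c/a)^2 * ((y - c)/a)^2) / P
   = 1/P + b*(c - y)/(P*a) + (1/Q - (a + b*c)/(P*a))/c^2 * (y-c)^2"
    using ap assms(3-5) by (simp add: field_simps power2_eq_square; simp add: algebra_simps)
  then show ?thesis unfolding e1 e2 e3 .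
qed

lemma pointwise:
  fixes al b c y :: real
  assumes "al > 0" "b > 0" "c > 0" "y \<ge> 0"
  shows "1 / (al + y) powr b \<le> 1 / (al+c) powr b + b * (c - y) / (al+c) powr (b+1)
     + (1 / al powr b - (al + c*(b+1)) / (al+c) powr (b+1)) / c^2 * (y - c)^2"
proof -
  define a where "a = al + c"
  have ap: "a > 0" using assms a_def by simp
  define r0 where "r0 = al / a"
  define r where "r = (al + y) / a"
  have r0: "0 < r0" "r0 < 1" "r0 \<le> r" using assms ap unfolding r0_def r_def a_def
    by (auto simp: divide_simps)
  have k: "pw b r \<le> 1 - b*(r-1) + HH b r0 * (r-1)^2" using key[OF r0(1,2,3) assms(2)] .
  have P: "a powr b > 0" using ap by simp
  have "pw b r / a powr b \<le> (1 - b*(r-1) + HH b r0 * (r-1)^2) / a powr b"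
    using k P by (simp add: divide_right_mono)
  moreover have "pw b r / a powr b = 1 / (al + y) powr b"
    unfolding pw_def r_def using ap assms by (simp add: powr_divide powr_minus divide_simps)
  moreover have "pw b r0 = a powr b / al powr b"
    unfolding pw_def r0_def using ap assms by (simp add: powr_divide powr_minus divide_simps)
  moreover have "a powr (b+1) = a powr b * a" using ap by (simp add: powr_add)
  ultimately show ?thesis
    using alg[OF a_def assms(1,3) P, of "al powr b" b y] assms
    unfolding HH_def r_def r0_def a_def by simp
qed


lemma fin_alg: fixes T0 b D c X V mu :: real assumes "c > 0"
  shows "(T0 + b/D*c + X/c^2*c^2) + (- (b/D) - 2*c*(X/c^2)) * mu + X/c^2 * (V + mu^2)
    = T0 + b * (c - mu) / D + (V + (c - mu)^2) / c^2 * X"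
  using assms by (simp add: field_simps power2_eq_square; algebra)

theorem mainTheorem8:
  fixes M :: "'a measure" and Y :: "'a \<Rightarrow> real"
    and \<alpha> \<beta> c :: real
  assumes "prob_space M"
    and "Y \<in> borel_measurable M"
    and "AE x in M. Y x \<ge> 0"
    and "integrable M Y"
    and "integrable M (\<lambda>x. (Y x)\<^sup>2)"
    and "\<alpha> > 0" and "\<beta> > 0" and "c > 0"
  shows "prob_space.expectation M (\<lambda>x. 1 / (\<alpha> + Y x) powr \<beta>)
      \<le> 1 / (\<alpha> + c) powr \<beta>
         + \<beta> * (c - prob_space.expectation M Y) / (\<alpha> + c) powr (\<beta> + 1)
         + (prob_space.variance M Y + (c - prob_space.expectation M Y)\<^sup>2) / c\<^sup>2
           * (1 / \<alpha> powr \<beta> - (\<alpha> + c * (\<beta> + 1)) / (\<alpha> + c) powr (\<beta> + 1))"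
proof -
  interpret prob_space M by fact
  define T0 where "T0 = 1 / (\<alpha> + c) powr \<beta>"
  define T1 where "T1 = \<beta> / (\<alpha> + c) powr (\<beta> + 1)"
  define T2 where "T2 = (1 / \<alpha> powr \<beta> - (\<alpha> + c * (\<beta> + 1)) / (\<alpha> + c) powr (\<beta> + 1)) / c\<^sup>2"
  define \<mu> where "\<mu> = expectation Y"
  define V where "V = variance Y"
  define g where "g = (\<lambda>x. (T0 + T1*c + T2*c^2) + (- T1 - 2*c*T2) * Y x + T2 * (Y x)\<^sup>2)"
  have pw: "AE x in M. 1 / (\<alpha> + Y x) powr \<beta> \<le> g x"
    using assms(3)
  proof eventually_elim
    case (elim x)
    have "1 / (\<alpha> + Y x) powr \<beta> \<le> T0 + \<beta> * (c - Y x) / (\<alpha> + c) powr (\<beta> + 1) + T2 * (Y x - c)^2"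
      using pointwise[OF assms(6,7,8) elim] unfolding T0_def T2_def by simp
    also have "\<dots> = g x" unfolding g_def T1_def
      by (simp add: diff_divide_distrib power2_eq_square algebra_simps)
    finally show ?case .
  qed
  have meas: "(\<lambda>x. 1 / (\<alpha> + Y x) powr \<beta>) \<in> borel_measurable M"
    using assms(2) by measurable
  have bnd: "AE x in M. norm (1 / (\<alpha> + Y x) powr \<beta>) \<le> 1 / \<alpha> powr \<beta>"
    using assms(3)
  proof eventually_elim
    case (elim x)
    have "\<alpha> powr \<beta> \<le> (\<alpha> + Y x) powr \<beta>" using elim assms(6,7) by (intro powr_mono2) auto
    moreover have "\<alpha> powr \<beta> > 0" using assms(6) by simp
    ultimately show ?case using elim assms(6) by (simp add: frac_le)
  qed
  have intL: "integrable M (\<lambda>x. 1 / (\<alpha> + Y x) powr \<beta>)"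
    by (rule integrable_const_bound[OF bnd meas])
  have intg: "integrable M g" unfolding g_def using assms(4,5) by auto
  have "expectation (\<lambda>x. 1 / (\<alpha> + Y x) powr \<beta>) \<le> expectation g"
    by (rule integral_mono_AE[OF intL intg pw])
  also have "expectation g = (T0 + T1*c + T2*c^2) + (- T1 - 2*c*T2) * \<mu> + T2 * expectation (\<lambda>x. (Y x)\<^sup>2)"
    unfolding g_def \<mu>_def using assms(4,5) by (simp add: prob_space)
  also have "expectation (\<lambda>x. (Y x)\<^sup>2) = V + \<mu>^2"
    using variance_eq[OF assms(4,5)] unfolding \<mu>_def V_def by simp
  finally have F: "expectation (\<lambda>x. 1 / (\<alpha> + Y x) powr \<beta>) \<le> (T0 + T1*c + T2*c^2) + (- T1 - 2*c*T2) * \<mu> + T2 * (V + \<mu>^2)" .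
  have E: "(T0 + T1*c + T2*c^2) + (- T1 - 2*c*T2) * \<mu> + T2 * (V + \<mu>^2)
     = T0 + \<beta> * (c - \<mu>) / (\<alpha> + c) powr (\<beta> + 1) + (V + (c - \<mu>)\<^sup>2) / c\<^sup>2
           * (1 / \<alpha> powr \<beta> - (\<alpha> + c * (\<beta> + 1)) / (\<alpha> + c) powr (\<beta> + 1))"
    unfolding T1_def T2_def by (rule fin_alg) (rule assms(8))
  show ?thesis using F[unfolded E] unfolding T0_def \<mu>_def V_def .
qed

end
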